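(* Let $S$ be an entropy function for a finite set $X$, let $X'\subset X$, let $S'$ be the restriction of $S$ to subsets of $X'$, and let $f'$ be an EDF for $S'$. Then there exists an EDF $f$ for $S$ with $f(x)=f'(x)$ for all $x\in X'$.
   Context: An entropy function for a finite set $X$ is a function $S:2^X\to[0,\infty)$ with $S(\emptyset)=0$, $S(A)+S(B)\ge S(A\cap B)+S(A\cup B)$ and $S(A)+S(B)\ge S(A\setminus B)+S(B\setminus A)$ for all $A,B\subseteq X$. An entanglement distribution function (EDF) for $S$ is a function $f:X\to\mathbb R$ with $\big|\sum_{x\in A}f(x)\big|\le S(A)$ for all $A\subseteq X$. The restriction $S'$ of $S$ to $2^{X'}$ is an entropy function for $X'$. *)

theory Defs
  imports Main "HOL-Library.Multiset" Complex_Main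
begin

definition entropy_function :: "'a set \<Rightarrow> ('a set \<Rightarrow> real) \<Rightarrow> bool" where
  "entropy_function X S \<longleftrightarrow> finite X \<and>
     (\<forall>A. A \<subseteq> X \<longrightarrow> S A \<ge> 0) \<and> S {} = 0 \<and>
     (\<forall>A B. A \<subseteq> X \<longrightarrow> B \<subseteq> X \<longrightarrow> S A + S B \<ge> S (A \<inter> B) + S (A \<union> B)) \<and>
     (\<forall>A B. A \<subseteq> X \<longrightarrow> B \<subseteq> X \<longrightarrow> S A + S B \<ge> S (A - B) + S (B - A))"

definition restrict_entropy :: "'a set \<Rightarrow> ('a set \<Rightarrow> real) \<Rightarrow> ('a set \<Rightarrow> real)" where
  "restrict_entropy X' S = (\<lambda>A. if A \<subseteq> X' then S A else 0)"

definition is_EDF :: "'a set \<Rightarrow> ('a set \<Rightarrow> real) \<Rightarrow> ('a \<Rightarrow> real) \<Rightarrow> bool" where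
  "is_EDF X S f \<longleftrightarrow> (\<forall>A. A \<subseteq> X \<longrightarrow> \<bar>\<Sum>x\<in>A. f x\<bar> \<le> S A)"

end

theory Submission
  imports Defs
begin

lemma ext_step:
  fixes S :: "'a set \<Rightarrow> real" and g :: "'a \<Rightarrow> real"
  assumes fin: "finite Y" and yY: "y \<notin> Y"
    and wm: "\<And>A B. A \<subseteq> insert y Y \<Longrightarrow> B \<subseteq> insert y Y \<Longrightarrow> S A + S B \<ge> S (A - B) + S (B - A)"
    and edf: "\<And>A. A \<subseteq> Y \<Longrightarrow> \<bar>sum g A\<bar> \<le> S A"
  shows "\<exists>t. \<forall>A. A \<subseteq> insert y Y \<longrightarrow> \<bar>sum (g(y:=t)) A\<bar> \<le> S A"
proof -
  define M where "M = (\<lambda>B. - S (insert y B) - sum g B) ` Pow Y"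
  have finM: "finite M" and neM: "M \<noteq> {}" using fin by (auto simp: M_def)
  define t where "t = Max M"
  have lo: "- S (insert y B) - sum g B \<le> t" if "B \<subseteq> Y" for B
    unfolding t_def using finM that by (intro Max_ge) (auto simp: M_def)
  have hi: "t \<le> S (insert y C) - sum g C" if C: "C \<subseteq> Y" for C
  proof -
    have "m \<le> S (insert y C) - sum g C" if "m \<in> M" for m
    proof -
      obtain B where B: "B \<subseteq> Y" and m: "m = - S (insert y B) - sum g B"
        using \<open>m \<in> M\<close> by (auto simp: M_def)
      have fB: "finite B" "finite C" using B C fin finite_subset by auto
      have w: "S (insert y B) + S (insert y C) \<ge> S (insert y B - insert y C) + S (insert y C - insert y B)"
        using wm[of "insert y B" "insert y C"] B C by auto
      have e1: "insert y B - insert y C = B - C" and e2: "insert y C - insert y B = C - B"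
        using B C yY by auto
      have s1: "sum g B = sum g (B - C) + sum g (B \<inter> C)"
        using sum.Int_Diff[of B g C] fB by simp
      have s2: "sum g C = sum g (C - B) + sum g (B \<inter> C)"
        using sum.Int_Diff[of C g B] fB by (simp add: Int_commute)
      have a1: "\<bar>sum g (B - C)\<bar> \<le> S (B - C)" using edf[of "B - C"] B by blast
      have a2: "\<bar>sum g (C - B)\<bar> \<le> S (C - B)" using edf[of "C - B"] C by blast
      show ?thesis using w e1 e2 s1 s2 a1 a2 m by auto
    qed
    then show ?thesis unfolding t_def using finM neM by (simp add: Max_le_iff)
  qed
  show ?thesis
  proof (intro exI allI impI)
    fix A assume A: "A \<subseteq> insert y Y"
    show "\<bar>sum (g(y:=t)) A\<bar> \<le> S A"
    proof (cases "y \<in> A")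
      case True
      define B where "B = A - {y}"
      have B: "B \<subseteq> Y" "y \<notin> B" "A = insert y B" using A True by (auto simp: B_def)
      have fB: "finite B" using B fin finite_subset by auto
      have "sum (g(y:=t)) A = t + sum g B"
        using B fB by (simp add: sum.insert_if) (rule sum.cong, auto)
      then show ?thesis using lo[OF B(1)] hi[OF B(1)] B(3) by auto
    next
      case False
      then have "A \<subseteq> Y" using A by auto
      moreover have "sum (g(y:=t)) A = sum g A" using False by (intro sum.cong) auto
      ultimately show ?thesis using edf by auto
    qed
  qed
qed

theorem theorem21:
  fixes X X' :: "'a set" and S :: "'a set \<Rightarrow> real" and f' :: "'a \<Rightarrow> real"
  assumes "entropy_function X S"
    and "X' \<subseteq> X"
    and "is_EDF X' (restrict_entropy X' S) f'"
  shows "\<exists>f. is_EDF X S f \<and> (\<forall>x\<in>X'. f x = f' x)"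
proof -
  have finX: "finite X" and wm: "\<And>A B. A \<subseteq> X \<Longrightarrow> B \<subseteq> X \<Longrightarrow> S A + S B \<ge> S (A - B) + S (B - A)"
    using assms(1) unfolding entropy_function_def by auto
  have base: "\<And>A. A \<subseteq> X' \<Longrightarrow> \<bar>sum f' A\<bar> \<le> S A"
    using assms(3) unfolding is_EDF_def restrict_entropy_def by auto
  have finX': "finite X'" using finX assms(2) finite_subset by auto
  have main: "D \<subseteq> X - X' \<Longrightarrow> \<exists>g. (\<forall>A. A \<subseteq> X' \<union> D \<longrightarrow> \<bar>sum g A\<bar> \<le> S A) \<and> (\<forall>x\<in>X'. g x = f' x)"
    if "finite D" for D
    using that
  proof (induction D rule: finite_induct)
    case empty
    then show ?case using base by (intro exI[of _ f']) auto
  next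
    case (insert y D)
    then obtain g where g1: "\<forall>A. A \<subseteq> X' \<union> D \<longrightarrow> \<bar>sum g A\<bar> \<le> S A"
      and g2: "\<forall>x\<in>X'. g x = f' x" by auto
    have yn: "y \<notin> X' \<union> D" using insert by auto
    have sub: "insert y (X' \<union> D) \<subseteq> X" using insert assms(2) by auto
    obtain t where t: "\<forall>A. A \<subseteq> insert y (X' \<union> D) \<longrightarrow> \<bar>sum (g(y:=t)) A\<bar> \<le> S A"
    proof -
      have "\<And>A B. A \<subseteq> insert y (X' \<union> D) \<Longrightarrow> B \<subseteq> insert y (X' \<union> D) \<Longrightarrow> S A + S B \<ge> S (A - B) + S (B - A)"
        using wm sub by (meson subset_trans)
      moreover have "finite (X' \<union> D)" using finX' insert(1) by simp
      ultimately show ?thesis using ext_step[of "X' \<union> D" y S g] yn g1 that by blast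
    qed
    show ?case
      proof (rule exI[of _ "g(y:=t)"], intro conjI ballI allI impI)
      fix A assume "A \<subseteq> X' \<union> insert y D"
      then have "A \<subseteq> insert y (X' \<union> D)" by blast
      then show "\<bar>sum (g(y:=t)) A\<bar> \<le> S A" using t by blast
    next
      fix x assume "x \<in> X'"
      then show "(g(y:=t)) x = f' x" using g2 yn by auto
    qed
  qed
  obtain g where g: "\<forall>A. A \<subseteq> X' \<union> (X - X') \<longrightarrow> \<bar>sum g A\<bar> \<le> S A" "\<forall>x\<in>X'. g x = f' x"
    using main[of "X - X'"] finX by auto
  have "X' \<union> (X - X') = X" using assms(2) by auto
  then show ?thesis using g unfolding is_EDF_def by auto
qed

end
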